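(* Let $R$ be an integral domain with quotient field $K$. Let $B=\bigcup_{0\ne a\in R}R[[t/a]]$, the union taken inside $K((t))$, where $R[[t/a]]=\{\sum_{n\ge0}c_n(t/a)^n : c_n\in R\}$, and let $F=\operatorname{Quot}(B)\subseteq K((t))$. Then $F$ is separably closed in $K((t))$. *)

theory Defs
  imports "HOL-Computational_Algebra.Formal_Laurent_Series"
          "HOL-Computational_Algebra.Fraction_Field"
          "HOL-Computational_Algebra.Polynomial"
begin

text \<open>R is the integral domain given by the type 'a; K = Quot(R) is 'a fract;
  K((t)) is 'a fract fls.  R is embedded into K via r |-> Fract r 1.\<close>

definition power_series_t_over :: "'a::idom \<Rightarrow> 'a fract fls set" where
  "power_series_t_over a =
     {f. \<exists>c :: nat \<Rightarrow> 'a. \<forall>n::int. fls_nth f n =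
        (if n < 0 then 0 else Fract (c (nat n)) 1 / (Fract a 1) ^ (nat n))}"

definition ring_B :: "'a::idom fract fls set" where
  "ring_B = (\<Union>a\<in>{a::'a. a \<noteq> 0}. power_series_t_over a)"

definition field_F :: "'a::idom fract fls set" where
  "field_F = {x / y | x y. x \<in> ring_B \<and> y \<in> ring_B \<and> y \<noteq> 0}"

text \<open>A polynomial with coefficients in a subfield F is separable iff it is coprime
  to its derivative in F[X] (Bezout identity with coefficients in F).\<close>
definition separable_poly_over :: "'b::field set \<Rightarrow> 'b poly \<Rightarrow> bool" where
  "separable_poly_over F p \<longleftrightarrow>
     (\<exists>u v. set (coeffs u) \<subseteq> F \<and> set (coeffs v) \<subseteq> F \<and> u * p + v * pderiv p = 1)"

definition separable_algebraic_over :: "'b::field set \<Rightarrow> 'b \<Rightarrow> bool" where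
  "separable_algebraic_over F x \<longleftrightarrow>
     (\<exists>p. p \<noteq> 0 \<and> set (coeffs p) \<subseteq> F \<and> separable_poly_over F p \<and> poly p x = 0)"

definition separably_closed_in :: "'b::field set \<Rightarrow> 'b set \<Rightarrow> bool" where
  "separably_closed_in F L \<longleftrightarrow> (\<forall>x\<in>L. separable_algebraic_over F x \<longrightarrow> x \<in> F)"

end

theory Submission
  imports Defs
begin

definition inR :: "'a::idom fract \<Rightarrow> bool" where
  "inR z \<longleftrightarrow> (\<exists>r. z = Fract r 1)"

lemma inR_Fract[simp,intro]: "inR (Fract r 1)" by (auto simp: inR_def)
lemma inR_0[simp,intro]: "inR 0" by (metis inR_Fract fract_collapse(1))
lemma inR_1[simp,intro]: "inR 1" by (metis inR_Fract fract_collapse(2))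
lemma inR_add[intro]: "inR a \<Longrightarrow> inR b \<Longrightarrow> inR (a + b)"
  by (auto simp: inR_def)
lemma inR_mult[intro]: "inR a \<Longrightarrow> inR b \<Longrightarrow> inR (a * b)"
  by (auto simp: inR_def)
lemma inR_uminus[intro]: "inR a \<Longrightarrow> inR (- a)"
  by (auto simp: inR_def)
lemma inR_diff[intro]: "inR a \<Longrightarrow> inR b \<Longrightarrow> inR (a - b)"
  by (auto simp: inR_def)
lemma inR_power[intro]: "inR a \<Longrightarrow> inR (a ^ n)"
  by (induction n) auto
lemma inR_sum[intro]: "(\<And>i. i \<in> A \<Longrightarrow> inR (f i)) \<Longrightarrow> inR (sum f A)"
  by (induction A rule: infinite_finite_induct) auto
lemma inR_of_nat[intro]: "inR (of_nat n)"
  by (metis inR_Fract of_nat_fract)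

definition Bw :: "'a::idom \<Rightarrow> nat \<Rightarrow> 'a fract fps \<Rightarrow> bool" where
  "Bw v k g \<longleftrightarrow> (\<forall>n. inR (g $ n * Fract v 1 ^ (n + k)))"

lemma Bw_0[simp]: "Bw v k 0" by (simp add: Bw_def)
lemma Bw_1[simp]: "Bw v k 1"
  by (auto simp: Bw_def fps_one_nth intro!: inR_power)
lemma Bw_const[simp]: "Bw v k (fps_const (Fract r 1))"
  by (auto simp: Bw_def intro!: inR_mult inR_power)
lemma Bw_X[simp]: "Bw v k fps_X"
  by (auto simp: Bw_def fps_X_def intro!: inR_power)
lemma Bw_add[intro]: "Bw v k f \<Longrightarrow> Bw v k g \<Longrightarrow> Bw v k (f + g)"
  by (auto simp: Bw_def distrib_right)
lemma Bw_uminus[intro]: "Bw v k f \<Longrightarrow> Bw v k (- f)"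
  by (auto simp: Bw_def)
lemma Bw_diff[intro]: "Bw v k f \<Longrightarrow> Bw v k g \<Longrightarrow> Bw v k (f - g)"
  by (auto simp: Bw_def left_diff_distrib)
lemma Bw_mult[intro]: 
  assumes "Bw v k f" "Bw v l g" shows "Bw v (k + l) (f * g)"
  unfolding Bw_def
proof
  fix n
  have "(f * g) $ n * Fract v 1 ^ (n + (k + l)) =
        (\<Sum>i=0..n. (f $ i * Fract v 1 ^ (i + k)) * (g $ (n - i) * Fract v 1 ^ ((n - i) + l)))"
    unfolding fps_mult_nth sum_distrib_right
  proof (rule sum.cong[OF refl])
    fix i assume "i \<in> {0..n}"
    then have "n + (k + l) = (i + k) + ((n - i) + l)" by auto
    then have e: "Fract v 1 ^ (n + (k + l)) = Fract v 1 ^ (i + k) * Fract v 1 ^ ((n - i) + l)"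
      by (metis power_add)
    show "f $ i * g $ (n - i) * Fract v 1 ^ (n + (k + l)) =
       f $ i * Fract v 1 ^ (i + k) * (g $ (n - i) * Fract v 1 ^ (n - i + l))"
      by (simp add: e mult_ac)
  qed
  also have "inR \<dots>"
  proof (rule inR_sum, rule inR_mult)
    fix i show "inR (f $ i * Fract v 1 ^ (i + k))" using assms(1) unfolding Bw_def by blast
    show "inR (g $ (n - i) * Fract v 1 ^ ((n - i) + l))" using assms(2) unfolding Bw_def by blast
  qed
  finally show "inR ((f * g) $ n * Fract v 1 ^ (n + (k + l)))" .
qed
lemma Bw_mono:
  assumes "Bw v k f" "k \<le> l" shows "Bw v l f"
  unfolding Bw_def
proof
  fix n
  have "f $ n * Fract v 1 ^ (n + l) = (f $ n * Fract v 1 ^ (n + k)) * Fract v 1 ^ (l - k)"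
  proof -
    have "n + l = (n + k) + (l - k)" using assms(2) by simp
    then show ?thesis by (metis power_add mult.assoc)
  qed
  also have "inR \<dots>"
    by (rule inR_mult[OF _ inR_power[OF inR_Fract]]) (use assms(1) in \<open>unfold Bw_def, blast\<close>)
  finally show "inR (f $ n * Fract v 1 ^ (n + l))" .
qed
lemma Bw_base:
  assumes "Bw v k f" shows "Bw (v * w) k f"
  unfolding Bw_def
proof
  fix n
  have "f $ n * Fract (v * w) 1 ^ (n + k) = (f $ n * Fract v 1 ^ (n + k)) * Fract w 1 ^ (n + k)"
    proof -
    have "Fract (v * w) 1 = Fract v 1 * Fract w 1" by simp
    then show ?thesis by (simp only: power_mult_distrib mult.assoc)
  qed
  also have "inR \<dots>"
    by (rule inR_mult[OF _ inR_power[OF inR_Fract]]) (use assms(1) in \<open>unfold Bw_def, blast\<close>)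
  finally show "inR (f $ n * Fract (v*w) 1 ^ (n + k))" .
qed
lemma Bw_power[intro]: "Bw v k f \<Longrightarrow> Bw v (k * n) (f ^ n)"
  by (induction n) (auto simp: dest: Bw_mult)
lemma Bw_power0[intro]: "Bw v 0 f \<Longrightarrow> Bw v 0 (f ^ n)"
  using Bw_power[of v 0 f n] by simp
lemma Bw_shift: "Bw v k f \<Longrightarrow> Bw v (k + j) (fps_shift j f)"
  unfolding Bw_def by (metis fps_shift_nth add.assoc add.commute)
lemma Bw_scale:
  assumes "Bw v k f" shows "Bw v 0 (fps_const (Fract v 1 ^ k) * f)"
  using assms by (auto simp: Bw_def mult_ac power_add)
lemma Bw_constmult: "Bw v k f \<Longrightarrow> Bw v k (fps_const (Fract r 1) * f)"
  by (auto simp: Bw_def mult.assoc)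

definition Bd :: "'a::idom \<Rightarrow> 'a fract fps \<Rightarrow> bool" where
  "Bd v g \<longleftrightarrow> (\<exists>k. Bw v k g)"

lemma Bd_add: "Bd v f \<Longrightarrow> Bd v g \<Longrightarrow> Bd v (f + g)"
  unfolding Bd_def by (metis Bw_add Bw_mono le_add1 le_add2)
lemma Bd_mult: "Bd v f \<Longrightarrow> Bd v g \<Longrightarrow> Bd v (f * g)"
  unfolding Bd_def by (metis Bw_mult)
lemma Bd_uminus: "Bd v f \<Longrightarrow> Bd v (- f)"
  unfolding Bd_def by (metis Bw_uminus)
lemma Bd_0[simp]: "Bd v 0" unfolding Bd_def by auto
lemma Bd_1[simp]: "Bd v 1" unfolding Bd_def by auto
lemma Bd_X[simp]: "Bd v fps_X" unfolding Bd_def by auto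
lemma Bd_I: "Bw v k f \<Longrightarrow> Bd v f" unfolding Bd_def by auto


lemma poly_diff_dvd: "(x - y) dvd (poly p x - poly p (y::'b::comm_ring_1))"
proof (induction p)
  case 0 then show ?case by simp
next
  case (pCons a p)
  have "poly (pCons a p) x - poly (pCons a p) y = x * (poly p x - poly p y) + (x - y) * poly p y"
    by (simp add: algebra_simps)
  then show ?case using pCons.IH by (simp add: dvd_add)
qed

lemma Xpow_dvd_nth: "fps_X ^ n dvd h \<Longrightarrow> m < n \<Longrightarrow> h $ m = 0"
  by (auto simp: fps_X_power_mult_nth elim!: dvdE)

lemma Xpow_dvdI: assumes "\<And>i. i < n \<Longrightarrow> h $ i = 0" shows "fps_X ^ n dvd h"
proof
  show "h = fps_X ^ n * fps_shift n h"
    by (rule fps_ext) (auto simp: fps_X_power_mult_nth assms)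
qed

lemma Fract_power: "Fract a b ^ n = Fract (a ^ n) (b ^ n)"
  by (induction n) (auto simp: fract_collapse)

lemma FP:
  fixes z A :: "'a::idom fract fps" and Psi :: "'a fract fps poly"
  assumes mu: "mu \<noteq> 0" and c1: "c1 \<noteq> 0" and c2: "c2 \<noteq> 0"
  and eq: "fps_const (Fract c1 c2) * z = A + fps_X * poly Psi z"
  and BA: "Bw mu 0 A" and BP: "\<And>i. Bw mu 0 (coeff Psi i)"
  shows "Bw (mu * c1 ^ degree Psi) 0 (fps_const (Fract c1 1) * z)"
proof -
  define D where "D = degree Psi"
  define rho where "rho = mu * c1 ^ D"
  define ci :: "'a fract fps" where "ci = fps_const (Fract 1 c1)"
  define w where "w = fps_const (Fract c1 1) * z"
  define G where "G h = poly Psi (ci * h)" for h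
  have "ci * w = fps_const (Fract 1 c1 * Fract c1 1) * z"
    unfolding ci_def w_def by (simp add: mult.assoc)
  also have "Fract 1 c1 * Fract c1 1 = 1" using c1 by (simp add: One_fract_def eq_fract)
  finally have zw: "z = ci * w" by simp
  have "fps_const (Fract c2 1) * (fps_const (Fract c1 c2) * z) = fps_const (Fract c2 1 * Fract c1 c2) * z"
    by (simp add: mult.assoc)
  also have "Fract c2 1 * Fract c1 c2 = Fract c1 1" using c2 by (simp add: eq_fract)
  finally have weq: "w = fps_const (Fract c2 1) * (A + fps_X * G w)"
    using eq unfolding G_def zw[symmetric] by (simp add: w_def)
  have BA': "Bw rho 0 A" unfolding rho_def by (rule Bw_base[OF BA])
  have BP': "Bw rho 0 (coeff Psi j)" for j unfolding rho_def by (rule Bw_base[OF BP])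
  have main: "inR (w $ n * Fract rho 1 ^ n)" for n
  proof (induction n rule: less_induct)
    case (less n)
    define g where "g = fps_cutoff n w"
    have Bg: "Bw rho 0 g" unfolding Bw_def g_def using less by auto
    have d1: "fps_X ^ n dvd (w - g)" by (rule Xpow_dvdI) (simp add: g_def)
    have "ci * w - ci * g dvd G w - G g" unfolding G_def by (rule poly_diff_dvd)
    moreover have "fps_X ^ n dvd ci * w - ci * g"
      using d1 by (simp add: right_diff_distrib[symmetric])
    ultimately have d2: "fps_X ^ n dvd (G w - G g)" by (rule dvd_trans[rotated])
    have Xeq: "(fps_X * G w) $ n = (fps_X * G g) $ n"
    proof (cases n)
      case (Suc m)
      then have "(G w - G g) $ m = 0" using Xpow_dvd_nth[OF d2] by simp
      then show ?thesis using Suc by simp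
    qed simp
    have XG: "inR ((fps_X * G g) $ n * Fract rho 1 ^ n)"
    proof (cases n)
      case (Suc m)
      have "G g = (\<Sum>j\<le>D. fps_const (Fract 1 c1 ^ j) * (coeff Psi j * g ^ j))"
        unfolding G_def poly_altdef D_def ci_def
        by (simp add: power_mult_distrib mult_ac)
      then have "(G g) $ m = (\<Sum>j\<le>D. Fract 1 c1 ^ j * (coeff Psi j * g ^ j) $ m)"
        by (simp only: fps_sum_nth fps_mult_left_const_nth)
      then have "(G g) $ m * Fract rho 1 ^ Suc m =
          (\<Sum>j\<le>D. (Fract 1 c1 ^ j * Fract rho 1) * ((coeff Psi j * g ^ j) $ m * Fract rho 1 ^ m))"
        by (simp add: sum_distrib_left sum_distrib_right mult_ac)
      also have "inR \<dots>"
      proof (rule inR_sum, rule inR_mult)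
        fix j assume "j \<in> {..D}"
        then have "Fract 1 c1 ^ j * Fract rho 1 = Fract (mu * c1 ^ (D - j)) 1"
          using c1 by (simp add: Fract_power rho_def eq_fract power_add[symmetric] mult_ac)
        then show "inR (Fract 1 c1 ^ j * Fract rho 1)" by simp
        have "Bw rho (0 + 0 * j) (coeff Psi j * g ^ j)"
          by (rule Bw_mult[OF BP' Bw_power[OF Bg]])
        then show "inR ((coeff Psi j * g ^ j) $ m * Fract rho 1 ^ m)" unfolding Bw_def by simp
      qed
      finally show ?thesis using Suc by simp
    qed simp
    have wn: "w $ n = Fract c2 1 * (A $ n + (fps_X * G g) $ n)"
      by (subst weq) (simp only: fps_mult_left_const_nth fps_add_nth Xeq)
    have "w $ n * Fract rho 1 ^ n =
          Fract c2 1 * (A $ n * Fract rho 1 ^ n) + Fract c2 1 * ((fps_X * G g) $ n * Fract rho 1 ^ n)"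
      unfolding wn by (simp add: algebra_simps)
    have a1: "inR (A $ n * Fract rho 1 ^ n)" using BA' unfolding Bw_def by simp
    have "inR (Fract c2 1 * (A $ n * Fract rho 1 ^ n) + Fract c2 1 * ((fps_X * G g) $ n * Fract rho 1 ^ n))"
      by (rule inR_add[OF inR_mult[OF inR_Fract a1] inR_mult[OF inR_Fract XG]])
    then show ?case using \<open>w $ n * Fract rho 1 ^ n = _\<close> by simp
  qed
  show ?thesis using main unfolding Bw_def w_def rho_def D_def by simp
qed


lemma Bd_power: "Bd v f \<Longrightarrow> Bd v (f ^ n)"
  by (induction n) (auto intro: Bd_mult)
lemma Bd_diff: "Bd v f \<Longrightarrow> Bd v g \<Longrightarrow> Bd v (f - g)"
  using Bd_add Bd_uminus by (metis diff_conv_add_uminus)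
lemma Bd_shift: "Bd v f \<Longrightarrow> Bd v (fps_shift j f)"
  unfolding Bd_def using Bw_shift by blast
lemma Bd_base: "Bd v f \<Longrightarrow> Bd (v * w) f"
  unfolding Bd_def using Bw_base by blast

lemma finite_coeffs:
  fixes a :: "'a::idom fract fps"
  assumes "\<And>i. i \<ge> N \<Longrightarrow> a $ i = 0"
  shows "\<exists>mu. mu \<noteq> 0 \<and> Bw mu 1 a"
proof -
  have "\<exists>d. d \<noteq> 0 \<and> inR (a $ i * Fract d 1)" for i
  proof (cases "a $ i")
    case (Fract r s)
    then have "a $ i * Fract s 1 = Fract r 1" by (simp add: eq_fract)
    then show ?thesis using Fract by (metis inR_Fract)
  qed
  then obtain dn where dn: "\<And>i. dn i \<noteq> 0" "\<And>i. inR (a $ i * Fract (dn i) 1)" by metis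
  define mu where "mu = (\<Prod>i<N. dn i)"
  have "mu \<noteq> 0" unfolding mu_def using dn(1) by simp
  moreover have "Bw mu 1 a" unfolding Bw_def
  proof
    fix i
    show "inR (a $ i * Fract mu 1 ^ (i + 1))"
    proof (cases "i < N")
      case True
      have "mu = dn i * (\<Prod>j\<in>{..<N} - {i}. dn j)" unfolding mu_def
        using True by (simp add: prod.remove)
      then have "a $ i * Fract mu 1 ^ (i + 1) =
          (a $ i * Fract (dn i) 1) * (Fract (\<Prod>j\<in>{..<N} - {i}. dn j) 1 * Fract mu 1 ^ i)"
        by (simp add: mult_ac)
      also have "inR \<dots>" using dn(2) by auto
      finally show ?thesis .
    next
      case False then show ?thesis using assms by simp
    qed
  qed
  ultimately show ?thesis by blast
qed

lemma Bw_unscale: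
  assumes "Bw rho 0 (fps_const (Fract c 1) * z)" shows "Bw (rho * c) 1 z"
  unfolding Bw_def
proof
  fix n
  have "z $ n * Fract (rho * c) 1 ^ (n + 1) = (Fract c 1 * z $ n * Fract rho 1 ^ n) * (Fract rho 1 * Fract c 1 ^ n)"
  proof -
    have "Fract (rho * c) 1 = Fract rho 1 * Fract c 1" by simp
    then show ?thesis by (simp only: power_mult_distrib power_add power_one_right mult_ac)
  qed
  also have "inR \<dots>"
    by (rule inR_mult[OF _ inR_mult[OF inR_Fract inR_power[OF inR_Fract]]]) (use assms in \<open>simp add: Bw_def\<close>)
  finally show "inR (z $ n * Fract (rho * c) 1 ^ (n + 1))" .
qed

lemma Bd_coeff_pcompose:
  assumes "\<And>i. Bd v (coeff p i)" "\<And>i. Bd v (coeff q i)"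
  shows "Bd v (coeff (pcompose p q) i)"
proof -
  have "coeff (pcompose p q) i \<in> Collect (Bd v)"
    by (rule coeff_pcompose_semiring_closed) (auto intro: Bd_add Bd_mult assms)
  then show ?thesis by simp
qed

lemma Bd_coeff_mult:
  assumes "\<And>i. Bd v (coeff p i)" "\<And>i. Bd v (coeff q i)"
  shows "Bd v (coeff (p * q) i)"
proof -
  have "coeff (p * q) i \<in> Collect (Bd v)"
    by (rule coeff_mult_semiring_closed) (auto intro: Bd_add Bd_mult assms)
  then show ?thesis by simp
qed


lemma core:
  fixes p :: "'a::idom fract fps poly" and y :: "'a fract fps"
  assumes nu: "nu \<noteq> 0" and Bp: "\<And>i. Bw nu 0 (coeff p i)"
    and root: "poly p y = 0" and der: "poly (pderiv p) y \<noteq> 0"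
  shows "\<exists>rho k. rho \<noteq> 0 \<and> Bw rho k y"
proof -
  define d where "d = poly (pderiv p) y"
  define e where "e = subdegree d"
  define N where "N = Suc e"
  define a where "a = fps_cutoff N y"
  obtain mu0 where mu0: "mu0 \<noteq> 0" "Bw mu0 1 a"
    using finite_coeffs[of N a] unfolding a_def by auto
  define mu where "mu = nu * mu0"
  have mu: "mu \<noteq> 0" using nu mu0 by (simp add: mu_def)
  have Bpm: "Bd mu (coeff p i)" for i unfolding mu_def by (rule Bd_base, rule Bd_I, rule Bp)
  have Ba: "Bw mu 1 a" using Bw_base[OF mu0(2), of nu] by (simp add: mu_def mult.commute)
  define q where "q = pcompose p [:a, 1:]"
  have Bq: "Bd mu (coeff q i)" for i unfolding q_def
    by (rule Bd_coeff_pcompose[OF Bpm]) (auto simp: coeff_pCons Bd_I[OF Ba] split: nat.split)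
  define r where "r = y - a"
  define z where "z = fps_shift N r"
  have rz: "r = fps_X ^ N * z"
    by (rule fps_ext) (auto simp: fps_X_power_mult_nth r_def a_def z_def)
  have qr: "poly q r = 0" using root by (simp add: q_def poly_pcompose r_def)
  have qdr: "poly (pderiv q) r = d"
    by (simp add: q_def pderiv_pcompose poly_pcompose r_def d_def pderiv_pCons)
  obtain q0 q' where qq: "q = pCons q0 q'" by (cases q) auto
  obtain q1 s where qq': "q' = pCons q1 s" by (cases q') auto
  have Bq0: "Bd mu q0" using Bq[of 0] by (simp add: qq)
  have Bq1: "Bd mu q1" using Bq[of 1] by (simp add: qq qq')
  have Bs: "Bd mu (coeff s i)" for i using Bq[of "Suc (Suc i)"] by (simp add: qq qq')
  define S where "S = poly s r"
  have eq0: "q0 + r * (q1 + r * S) = 0" using qr by (simp add: qq qq' S_def)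
  define W where "W = S + poly (pderiv (pCons q1 s)) r"
  have eqd: "d - q1 = r * W" using qdr by (simp add: qq qq' W_def S_def pderiv_pCons algebra_simps)
  have dvd1: "fps_X ^ N dvd (d - q1)" unfolding eqd rz by (simp add: mult.assoc)
  have q1d: "q1 $ i = d $ i" if "i < N" for i
    using Xpow_dvd_nth[OF dvd1 that] by simp
  have d0: "d \<noteq> 0" using der by (simp add: d_def)
  have q1low: "q1 $ i = 0" if "i < e" for i
    using q1d[of i] that nth_less_subdegree_zero[of i d] by (simp add: N_def e_def)
  define u where "u = fps_shift e q1"
  have q1u: "q1 = fps_X ^ e * u"
    by (rule fps_ext) (auto simp: fps_X_power_mult_nth u_def q1low)
  define c where "c = u $ 0"
  have c0: "c \<noteq> 0" using q1d[of e] d0 by (simp add: c_def u_def N_def e_def)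
  define v where "v = fps_shift 1 u"
  have uv: "u = fps_const c + fps_X * v"
    by (rule fps_ext) (auto simp: c_def v_def)
  have "q0 = - (r * q1 + r * r * S)" using eq0 by (simp add: algebra_simps add_eq_0_iff)
  also have "\<dots> = fps_X ^ (N + e) * (-(z * u + fps_X * (z * z * S)))"
    unfolding rz q1u N_def by (simp add: algebra_simps power_add)
  finally have q0eq: "q0 = fps_X ^ (N + e) * (-(z * u + fps_X * (z * z * S)))" .
  define A where "A = fps_shift (N + e) q0"
  have Aeq: "A = -(z * u + fps_X * (z * z * S))"
    unfolding A_def q0eq by (metis fps_shift_times_fps_X_power' mult.commute)
  have BA: "Bd mu A" unfolding A_def by (rule Bd_shift[OF Bq0])
  have Bv: "Bd mu v" unfolding v_def u_def by (rule Bd_shift, rule Bd_shift[OF Bq1])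
  define Psi where "Psi = [:0, -v:] - monom 1 2 * pcompose s [:0, fps_X ^ N:]"
  have polyPsi: "poly Psi z = -(v * z) - z * z * S"
    by (simp add: Psi_def poly_monom poly_pcompose S_def rz power2_eq_square mult_ac)
  have zeq: "fps_const c * z = - A + fps_X * poly Psi z"
    unfolding polyPsi Aeq uv by (simp add: algebra_simps)
  have BPsi: "Bd mu (coeff Psi i)" for i
  proof -
    have 1: "Bd mu (coeff [:0, -v:] i)"
      by (auto simp: coeff_pCons Bd_uminus[OF Bv] split: nat.split)
    have 2: "Bd mu (coeff (monom 1 2 * pcompose s [:0, fps_X ^ N:]) i)"
    proof (rule Bd_coeff_mult)
      fix j show "Bd mu (coeff (monom 1 2) j)" by (auto simp: coeff_monom)
      show "Bd mu (coeff (pcompose s [:0, fps_X ^ N:]) j)"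
        by (rule Bd_coeff_pcompose[OF Bs]) (auto simp: coeff_pCons Bd_power split: nat.split)
    qed
    show ?thesis unfolding Psi_def coeff_diff by (rule Bd_diff[OF 1 2])
  qed
  obtain kk where kk: "\<And>i. Bw mu (kk i) (coeff Psi i)" using BPsi unfolding Bd_def by metis
  obtain kA where kA: "Bw mu kA A" using BA unfolding Bd_def by blast
  define K where "K = kA + (\<Sum>i\<le>degree Psi. kk i)"
  have BPK: "Bw mu K (coeff Psi i)" for i
  proof (cases "i \<le> degree Psi")
    case True
    have "kk i \<le> (\<Sum>i\<le>degree Psi. kk i)" using True by (intro member_le_sum) auto
    then show ?thesis using Bw_mono[OF kk[of i]] by (simp add: K_def)
  qed (simp add: coeff_eq_0)
  have BAK: "Bw mu K A" using Bw_mono[OF kA] by (simp add: K_def)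
  define M where "M = Fract mu 1 ^ K"
  have "Fract mu 1 \<noteq> 0" using mu by (simp add: eq_fract Zero_fract_def)
  then have M0: "M \<noteq> 0" by (simp add: M_def)
  obtain c1 c2 where cc: "c * M = Fract c1 c2" "c2 \<noteq> 0" by (cases "c * M") auto
  have c1: "c1 \<noteq> 0" using cc c0 M0 by (auto simp: fract_collapse)
  define Psi' where "Psi' = smult (fps_const M) Psi"
  have eq': "fps_const (Fract c1 c2) * z = (- (fps_const M * A)) + fps_X * poly Psi' z"
  proof -
    have "fps_const (Fract c1 c2) * z = fps_const M * (fps_const c * z)"
      by (simp add: cc(1)[symmetric] mult_ac)
    also have "\<dots> = (- (fps_const M * A)) + fps_X * poly Psi' z"
      unfolding zeq Psi'_def by (simp add: algebra_simps)
    finally show ?thesis .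
  qed
  have "Bw (mu * c1 ^ degree Psi') 0 (fps_const (Fract c1 1) * z)"
  proof (rule FP[OF mu c1 cc(2) eq'])
    show "Bw mu 0 (- (fps_const M * A))" unfolding M_def by (rule Bw_uminus, rule Bw_scale[OF BAK])
    fix i show "Bw mu 0 (coeff Psi' i)" unfolding Psi'_def M_def by (simp add: Bw_scale[OF BPK])
  qed
  then have Bz: "Bw (mu * c1 ^ degree Psi' * c1) 1 z" by (rule Bw_unscale)
  define rho where "rho = mu * c1 ^ degree Psi' * c1 * mu"
  have "Bw rho 1 (fps_X ^ N * z)"
    using Bw_mult[OF Bw_power0[OF Bw_X] Bw_base[OF Bz, of mu]] by (simp add: rho_def)
  moreover have "Bw rho 1 a" using Bw_base[OF Ba, of "mu * c1 ^ degree Psi' * c1"]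
    by (simp add: rho_def mult_ac)
  ultimately have "Bw rho 1 y" using Bw_add rz by (metis r_def add.commute diff_add_cancel)
  moreover have "rho \<noteq> 0" using mu c1 by (simp add: rho_def)
  ultimately show ?thesis by blast
qed


lemma Fract_pow_nz: "v \<noteq> 0 \<Longrightarrow> Fract (v::'a::idom) 1 ^ n \<noteq> 0"
proof -
  assume "v \<noteq> 0"
  then have "Fract v 1 \<noteq> 0" by (simp add: eq_fract Zero_fract_def)
  then show ?thesis by simp
qed

lemma pts_to_Bw:
  assumes "f \<in> power_series_t_over v" "v \<noteq> 0"
  shows "\<exists>g. f = fps_to_fls g \<and> Bw v 0 g"
proof -
  obtain c where c: "\<And>n::int. fls_nth f n = (if n < 0 then 0 else Fract (c (nat n)) 1 / (Fract v 1) ^ (nat n))"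
    using assms(1) unfolding power_series_t_over_def by blast
  define g where "g = fls_regpart f"
  have "f = fps_to_fls g" by (rule fls_eqI) (simp add: g_def c)
  moreover have "Bw v 0 g" unfolding Bw_def
  proof
    fix n
    have "g $ n * Fract v 1 ^ (n + 0) = Fract (c n) 1"
      using Fract_pow_nz[OF assms(2), of n] by (simp add: g_def c)
    then show "inR (g $ n * Fract v 1 ^ (n + 0))" by simp
  qed
  ultimately show ?thesis by blast
qed

lemma Bw_to_pts:
  assumes "Bw v 0 g" "v \<noteq> 0"
  shows "fps_to_fls g \<in> power_series_t_over v"
proof -
  have "\<forall>n. \<exists>r. g $ n * Fract v 1 ^ n = Fract r 1" using assms(1) by (simp add: Bw_def inR_def)
  then obtain c where c: "\<And>n. g $ n * Fract v 1 ^ n = Fract (c n) 1" by metis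
  have "g $ n = Fract (c n) 1 / Fract v 1 ^ n" for n
    using c[of n] Fract_pow_nz[OF assms(2), of n] by (simp add: field_simps)
  then show ?thesis unfolding power_series_t_over_def by (auto intro!: exI[of _ c])
qed

lemma ring_B_char: "f \<in> ring_B \<longleftrightarrow> (\<exists>g v. v \<noteq> 0 \<and> Bw v 0 g \<and> f = fps_to_fls g)"
  unfolding ring_B_def using pts_to_Bw Bw_to_pts by blast

lemma ring_B_mult: "f \<in> ring_B \<Longrightarrow> h \<in> ring_B \<Longrightarrow> f * h \<in> ring_B"
proof -
  assume "f \<in> ring_B" "h \<in> ring_B"
  then obtain g1 v1 g2 v2 where "v1 \<noteq> 0" "Bw v1 0 g1" "f = fps_to_fls g1"
    "v2 \<noteq> 0" "Bw v2 0 g2" "h = fps_to_fls g2" unfolding ring_B_char by metis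
  moreover have "Bw (v1 * v2) 0 g1" "Bw (v1 * v2) 0 g2"
    using Bw_base[OF \<open>Bw v1 0 g1\<close>, of v2] Bw_base[OF \<open>Bw v2 0 g2\<close>, of v1]
    by (simp_all add: mult.commute)
  ultimately show ?thesis unfolding ring_B_char
    by (intro exI[of _ "g1 * g2"] exI[of _ "v1 * v2"]) (auto simp: fls_times_fps_to_fls dest: Bw_mult)
qed

lemma ring_B_1: "1 \<in> ring_B"
  unfolding ring_B_char by (intro exI[of _ 1] exI[of _ 1]) simp

lemma ring_B_0: "0 \<in> ring_B"
  unfolding ring_B_char by (intro exI[of _ 0] exI[of _ 1]) simp

lemma ring_B_prod: "(\<And>i. i \<in> A \<Longrightarrow> f i \<in> ring_B) \<Longrightarrow> prod f A \<in> ring_B"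
  by (induction A rule: infinite_finite_induct) (auto intro: ring_B_1 ring_B_mult)

lemma field_F_0: "0 \<in> field_F"
  unfolding field_F_def using ring_B_0 ring_B_1 by force

lemma poly_map_fps_to_fls:
  "poly (map_poly fps_to_fls p) (fps_to_fls y) = fps_to_fls (poly p y)"
  by (induction p) (auto simp: map_poly_pCons fls_times_fps_to_fls)

lemma pderiv_map_fps_to_fls:
  "pderiv (map_poly fps_to_fls p) = map_poly fps_to_fls (pderiv (p :: 'b::idom fract fps poly))"
  by (rule poly_eqI) (simp add: coeff_pderiv coeff_map_poly fls_times_fps_to_fls fps_to_fls_of_nat)


theorem proposition5p3:
  shows "separably_closed_in (field_F :: 'a::idom fract fls set) UNIV"
  unfolding separably_closed_in_def separable_algebraic_over_def separable_poly_over_def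
proof (intro ballI impI)
  fix x :: "'a fract fls"
  assume "\<exists>p. p \<noteq> 0 \<and> set (coeffs p) \<subseteq> field_F \<and>
        (\<exists>u v. set (coeffs u) \<subseteq> field_F \<and> set (coeffs v) \<subseteq> field_F \<and> u * p + v * pderiv p = 1)
        \<and> poly p x = 0"
  then obtain p u v where p0: "p \<noteq> 0" and pF: "set (coeffs p) \<subseteq> field_F"
    and uv: "u * p + v * pderiv p = 1" and px: "poly p x = 0" by blast
  have "poly (u * p + v * pderiv p) x = 1" using uv by simp
  then have dx: "poly (pderiv p) x \<noteq> 0" using px by auto
  have cF: "coeff p i \<in> field_F" for i
  proof (cases "i \<le> degree p")
    case True then show ?thesis using coeff_in_coeffs[OF p0 True] pF by blast
  qed (simp add: coeff_eq_0 field_F_0)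
  have "\<exists>a b. coeff p i = a / b \<and> a \<in> ring_B \<and> b \<in> ring_B \<and> b \<noteq> 0" for i
    using cF[of i] unfolding field_F_def by blast
  then obtain yy zz where yz: "\<And>i. coeff p i = yy i / zz i" "\<And>i. yy i \<in> ring_B"
    "\<And>i. zz i \<in> ring_B" "\<And>i. zz i \<noteq> 0" by metis
  define Dn where "Dn = (\<Prod>i\<le>degree p. zz i)"
  have Dn0: "Dn \<noteq> 0" unfolding Dn_def using yz(4) by simp
  define Q where "Q = smult Dn p"
  have QB: "coeff Q i \<in> ring_B" for i
  proof (cases "i \<le> degree p")
    case True
    define rest where "rest = (\<Prod>j\<in>{..degree p} - {i}. zz j)"
    have "Dn = zz i * rest" unfolding Dn_def rest_def using True by (simp add: prod.remove)
    then have "coeff Q i = yy i * rest" unfolding Q_def using yz(1)[of i] yz(4)[of i] by simp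
    moreover have "rest \<in> ring_B" unfolding rest_def by (rule ring_B_prod) (use yz(3) in auto)
    ultimately show ?thesis using yz(2) ring_B_mult by metis
  qed (simp add: Q_def coeff_eq_0 ring_B_0)
  have Qx: "poly Q x = 0" by (simp add: Q_def px)
  have dQ: "poly (pderiv Q) x \<noteq> 0" by (simp add: Q_def pderiv_smult dx Dn0)
  have "\<exists>g w. w \<noteq> 0 \<and> Bw w 0 g \<and> coeff Q i = fps_to_fls g" for i
    using QB[of i] unfolding ring_B_char by blast
  then obtain gg vv where gv: "\<And>i. vv i \<noteq> 0" "\<And>i. Bw (vv i) 0 (gg i)"
    "\<And>i. coeff Q i = fps_to_fls (gg i)" by metis
  define DQ where "DQ = degree Q"
  define nu where "nu = (\<Prod>i\<le>DQ. vv i)"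
  have nu0: "nu \<noteq> 0" unfolding nu_def using gv(1) by simp
  have Bgg: "Bw nu 0 (gg i)" if "i \<le> DQ" for i
  proof -
    have "nu = vv i * (\<Prod>j\<in>{..DQ} - {i}. vv j)" unfolding nu_def using that by (simp add: prod.remove)
    then show ?thesis using Bw_base[OF gv(2)[of i]] by simp
  qed
  show "x \<in> field_F"
  proof (cases "x = 0")
    case True then show ?thesis using field_F_0 by simp
  next
    case False
    define m where "m = nat (- fls_subdegree x)"
    define s :: "'a fract fls" where "s = fls_X ^ m"
    have sfps: "s = fps_to_fls (fps_X ^ m)" by (simp add: s_def fps_to_fls_power)
    have s0: "s \<noteq> 0" by (simp add: s_def)
    define x' where "x' = s * x"
    have x'neg: "fls_nth x' n = 0" if "n < 0" for n
    proof -
      have "fls_nth x' n = fls_nth x (n - int m)"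
        by (simp add: x'_def s_def fls_X_power_times_conv_shift)
      also have "\<dots> = 0" using that by (intro fls_eq0_below_subdegree) (simp add: m_def)
      finally show ?thesis .
    qed
    define y where "y = fls_regpart x'"
    have x'y: "x' = fps_to_fls y" by (rule fls_eqI) (simp add: y_def x'neg)
    have sxs: "s * x * inverse s = x" "inverse s * (s * x) = x" using s0 by (simp_all add: field_simps)
    define Qs where "Qs = smult (s ^ DQ) (pcompose Q [:0, inverse s:])"
    define ph where "ph i = (if i \<le> DQ then fps_X ^ (m * (DQ - i)) * gg i else 0)" for i
    have coeffQs: "coeff Qs i = fps_to_fls (ph i)" for i
    proof (cases "i \<le> DQ")
      case True
      have "s ^ DQ * inverse s ^ i = s ^ (DQ - i)"
        using s0 True by (simp add: power_diff power_inverse divide_inverse)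
      then have "coeff Qs i = s ^ (DQ - i) * coeff Q i"
        by (simp add: Qs_def coeff_pcompose_linear mult.assoc[symmetric])
      then show ?thesis using True
        by (simp add: ph_def gv(3) sfps fls_times_fps_to_fls fps_to_fls_power power_mult[symmetric])
    next
      case False
      then show ?thesis by (simp add: Qs_def coeff_pcompose_linear ph_def coeff_eq_0 DQ_def)
    qed
    define Ph where "Ph = map_poly fls_regpart Qs"
    have coeffPh: "coeff Ph i = ph i" for i
      by (simp add: Ph_def coeff_map_poly coeffQs)
    have Phback: "map_poly fps_to_fls Ph = Qs"
      by (rule poly_eqI) (simp add: coeff_map_poly coeffPh coeffQs)
    have BPh: "Bw nu 0 (coeff Ph i)" for i
    proof (cases "i \<le> DQ")
      case True
      have "Bw nu (0 + 0) (fps_X ^ (m * (DQ - i)) * gg i)"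
        by (rule Bw_mult[OF Bw_power0[OF Bw_X] Bgg[OF True]])
      then show ?thesis using True by (simp add: coeffPh ph_def)
    qed (simp add: coeffPh ph_def)
    have "fps_to_fls (poly Ph y) = poly Qs x'"
      by (simp add: poly_map_fps_to_fls[symmetric] Phback x'y)
    also have "\<dots> = s ^ DQ * poly Q x"
      using s0 by (simp add: Qs_def poly_pcompose x'_def sxs)
    finally have Phy: "poly Ph y = 0" using Qx by simp
    have "fps_to_fls (poly (pderiv Ph) y) = poly (pderiv Qs) x'"
      by (simp add: poly_map_fps_to_fls[symmetric] pderiv_map_fps_to_fls[symmetric] Phback x'y)
    also have "\<dots> = s ^ DQ * (poly (pderiv Q) x * inverse s)"
      using s0 by (simp add: sxs Qs_def poly_pcompose x'_def pderiv_smult pderiv_pcompose pderiv_pCons)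
    finally have dPh: "poly (pderiv Ph) y \<noteq> 0" using s0 dQ by auto
    obtain rho k where rk: "rho \<noteq> 0" "Bw rho k y" using core[OF nu0 BPh Phy dPh] by blast
    define C where "C = Fract rho 1 ^ k"
    have C0: "C \<noteq> 0" unfolding C_def by (rule Fract_pow_nz[OF rk(1)])
    have CR: "C = Fract (rho ^ k) 1" unfolding C_def by (simp add: Fract_power)
    define num where "num = fps_to_fls (fps_const C * y)"
    define den where "den = fps_to_fls (fps_const C * fps_X ^ m)"
    have numB: "num \<in> ring_B" unfolding num_def ring_B_char C_def
      using Bw_scale[OF rk(2)] rk(1) by blast
    have "Bw rho (0 + 0) (fps_const C * fps_X ^ m)"
      unfolding CR by (rule Bw_mult[OF Bw_const Bw_power0[OF Bw_X]])
    then have denB: "den \<in> ring_B" unfolding den_def ring_B_char using rk(1) by auto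
    have den0: "den \<noteq> 0" using C0 by (simp add: den_def)
    have "num = fls_const C * (s * x)"
      by (simp add: num_def fls_times_fps_to_fls x'y[symmetric] x'_def)
    moreover have "den = fls_const C * s"
      by (simp add: den_def fls_times_fps_to_fls sfps)
    ultimately have "x = num / den" using s0 C0 by (simp add: field_simps)
    then show ?thesis unfolding field_F_def using numB denB den0 by blast
  qed
qed

end
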